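(* Let $k$ be a positive integer, $p\ge 1$ and $0<\delta\le 1$. Let $(\Omega,\mathcal{F},\mathbb{P})$ be a probability space, $\Sigma$ a $k$-semiring on $\Omega$ with $\Sigma\subseteq\mathcal{F}$, $\mathcal{Q}$ a finite partition of $\Omega$ with $\mathcal{Q}\subseteq\Sigma$, and $f\in L_p(\Omega,\mathcal{F},\mathbb{P})$ with $\|f-\mathbb{E}(f\mid\mathcal{A}_{\mathcal{Q}})\|_{\Sigma}>\delta$. Then there exists a refinement $\mathcal{R}$ of $\mathcal{Q}$ with $\mathcal{R}\subseteq\Sigma$ and $|\mathcal{R}|\le|\mathcal{Q}|(k+1)$ such that $\|\mathbb{E}(f\mid\mathcal{A}_{\mathcal{R}})-\mathbb{E}(f\mid\mathcal{A}_{\mathcal{Q}})\|_{L_p}>\delta$.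
   Context: A collection $\Sigma$ of subsets of a nonempty set $\Omega$ is a $k$-semiring on $\Omega$ if: $\emptyset,\Omega\in\Sigma$; $S\cap T\in\Sigma$ for $S,T\in\Sigma$; for $S,T\in\Sigma$ there exist $\ell\in\{1,\dots,k\}$ and pairwise disjoint $R_1,\dots,R_\ell\in\Sigma$ with $S\setminus T=R_1\cup\dots\cup R_\ell$. The $\Sigma$-uniformity norm is $\|g\|_{\Sigma}=\sup\{|\int_S g\,d\mathbb{P}|:S\in\Sigma\}$. For a finite partition $\mathcal{Q}$, $\mathcal{A}_{\mathcal{Q}}$ is the $\sigma$-algebra generated by $\mathcal{Q}$; $\mathcal{Q}\subseteq\Sigma$ means every member of $\mathcal{Q}$ lies in $\Sigma$. *)

theory Defs
  imports "HOL-Probability.Probability"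
begin

definition k_semiring :: "nat \<Rightarrow> 'a set \<Rightarrow> 'a set set \<Rightarrow> bool" where
  "k_semiring k \<Omega> \<Sigma> \<longleftrightarrow>
     \<Omega> \<noteq> {} \<and> (\<forall>S\<in>\<Sigma>. S \<subseteq> \<Omega>) \<and> {} \<in> \<Sigma> \<and> \<Omega> \<in> \<Sigma> \<and>
     (\<forall>S\<in>\<Sigma>. \<forall>T\<in>\<Sigma>. S \<inter> T \<in> \<Sigma>) \<and>
     (\<forall>S\<in>\<Sigma>. \<forall>T\<in>\<Sigma>. \<exists>l R. 1 \<le> l \<and> l \<le> k \<and> (\<forall>i<l. R i \<in> \<Sigma>) \<and>
        (\<forall>i<l. \<forall>j<l. i \<noteq> j \<longrightarrow> R i \<inter> R j = {}) \<and>
        S - T = (\<Union>i<l. R i))"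

definition finite_partition :: "'a set \<Rightarrow> 'a set set \<Rightarrow> bool" where
  "finite_partition \<Omega> Q \<longleftrightarrow> finite Q \<and> (\<forall>A\<in>Q. A \<noteq> {}) \<and> disjoint Q \<and> \<Union>Q = \<Omega>"

definition refines :: "'a set set \<Rightarrow> 'a set set \<Rightarrow> bool" where
  "refines R Q \<longleftrightarrow> (\<forall>B\<in>R. \<exists>A\<in>Q. B \<subseteq> A)"

definition part_alg :: "'a measure \<Rightarrow> 'a set set \<Rightarrow> 'a measure" where
  "part_alg M Q = sigma (space M) Q"

definition cond_exp_part :: "'a measure \<Rightarrow> 'a set set \<Rightarrow> ('a \<Rightarrow> real) \<Rightarrow> 'a \<Rightarrow> real" where
  "cond_exp_part M Q f = real_cond_exp M (part_alg M Q) f"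

definition Lp_norm :: "'a measure \<Rightarrow> real \<Rightarrow> ('a \<Rightarrow> real) \<Rightarrow> real" where
  "Lp_norm M p g = (\<integral>x. \<bar>g x\<bar> powr p \<partial>M) powr (1 / p)"

definition in_Lp :: "'a measure \<Rightarrow> real \<Rightarrow> ('a \<Rightarrow> real) \<Rightarrow> bool" where
  "in_Lp M p f \<longleftrightarrow> f \<in> borel_measurable M \<and> integrable M (\<lambda>x. \<bar>f x\<bar> powr p)"

definition unif_norm :: "'a measure \<Rightarrow> 'a set set \<Rightarrow> ('a \<Rightarrow> real) \<Rightarrow> real" where
  "unif_norm M \<Sigma> g = Sup {\<bar>LINT x:S|M. g x\<bar> | S. S \<in> \<Sigma>}"

end

theory Submission
  imports Defs
begin

lemma powr_ineq_aux:
  fixes a b t p :: real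
  assumes "a \<ge> 0" "b \<ge> 0" "0 < t" "t < 1" "p \<ge> 1"
  shows "((1-t)*a + t*b) powr p \<le> (1-t) * a powr p + t * b powr p"
proof (cases "a = 0 \<or> b = 0")
  case False
  then have "a \<in> {0<..}" "b \<in> {0<..}" using assms by auto
  from convex_onD[OF powr_convex[OF assms(5)] _ _ this] assms show ?thesis by simp
next
  case True
  have tp: "t powr p \<le> t" using powr_mono'[of 1 p t] assms by simp
  have tp2: "(1-t) powr p \<le> 1-t" using powr_mono'[of 1 p "1-t"] assms by simp
  show ?thesis using True proof
    assume "a = 0" then show ?thesis using assms tp by (simp add: powr_mult mult_right_mono)
  next
    assume "b = 0" then show ?thesis using assms tp2 by (simp add: powr_mult mult_right_mono)
  qed
qed

lemma convex_abs_powr: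
  fixes p :: real assumes "p \<ge> 1"
  shows "convex_on UNIV (\<lambda>x::real. \<bar>x\<bar> powr p)"
proof (rule convex_onI)
  fix t x y :: real assume t: "0 < t" "t < 1"
  have "\<bar>(1-t) *\<^sub>R x + t *\<^sub>R y\<bar> \<le> (1-t)*\<bar>x\<bar> + t*\<bar>y\<bar>"
    using t by (simp add: abs_triangle_ineq[THEN order_trans] abs_mult)
  then have "\<bar>(1-t) *\<^sub>R x + t *\<^sub>R y\<bar> powr p \<le> ((1-t)*\<bar>x\<bar> + t*\<bar>y\<bar>) powr p"
    using assms by (intro powr_mono2) auto
  also have "\<dots> \<le> (1-t) * \<bar>x\<bar> powr p + t * \<bar>y\<bar> powr p"
    using powr_ineq_aux[of "\<bar>x\<bar>" "\<bar>y\<bar>" t p] t assms by auto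
  finally show "\<bar>(1-t) *\<^sub>R x + t *\<^sub>R y\<bar> powr p \<le> (1-t) * \<bar>x\<bar> powr p + t * \<bar>y\<bar> powr p" .
qed auto

lemma subalg_part:
  assumes "prob_space M" "Q \<subseteq> sets M"
  shows "sigma_finite_subalgebra M (part_alg M Q)"
proof -
  interpret prob_space M by fact
  have QP: "Q \<subseteq> Pow (space M)" using assms(2) sets.sets_into_space by auto
  have "subalgebra M (part_alg M Q)"
    unfolding subalgebra_def part_alg_def
    using sets_measure_of[OF QP] sets.sigma_sets_subset[OF assms(2)] space_measure_of[OF QP]
    by auto
  then have "finite_measure_subalgebra M (part_alg M Q)"
    by (simp add: finite_measure_subalgebra_def finite_measure_subalgebra_axioms_def
        finite_measure_axioms)
  then show ?thesis by (rule finite_measure_subalgebra_is_sigma_finite)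
qed

lemma Lp_integrable:
  assumes "prob_space M" "p \<ge> 1" "in_Lp M p f"
  shows "integrable M f"
proof -
  interpret prob_space M by fact
  have m[measurable]: "f \<in> borel_measurable M" and i: "integrable M (\<lambda>x. \<bar>f x\<bar> powr p)"
    using assms(3) unfolding in_Lp_def by auto
  have "\<bar>f x\<bar> \<le> 1 + \<bar>f x\<bar> powr p" for x
  proof (cases "\<bar>f x\<bar> \<le> 1")
    case True then show ?thesis by (smt (verit) powr_ge_zero)
  next
    case False
    then have "\<bar>f x\<bar> powr 1 \<le> \<bar>f x\<bar> powr p" using assms(2) by (intro powr_mono) auto
    then show ?thesis using False by simp
  qed
  note bnd = this
  have int1: "integrable M (\<lambda>x. 1 + \<bar>f x\<bar> powr p)" using i by simp
  show ?thesis
  proof (rule Bochner_Integration.integrable_bound[OF int1])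
    show "f \<in> borel_measurable M" by (rule m)
    have "norm (f x) \<le> norm (1 + \<bar>f x\<bar> powr p)" for x
      using bnd[of x] by (smt (verit) powr_ge_zero real_norm_def)
    then show "AE x in M. norm (f x) \<le> norm (1 + \<bar>f x\<bar> powr p)" by (intro AE_I2)
  qed
qed

lemma cond_Lp:
  assumes sfs: "sigma_finite_subalgebra M F" and "prob_space M" "p \<ge> 1" "in_Lp M p f"
  shows "integrable M (\<lambda>x. \<bar>real_cond_exp M F f x\<bar> powr p)"
proof -
  have m[measurable]: "f \<in> borel_measurable M" and i: "integrable M (\<lambda>x. \<bar>f x\<bar> powr p)"
    using assms(4) unfolding in_Lp_def by auto
  have intf: "integrable M f" using Lp_integrable assms(2-4) by blast
  have J: "AE x in M. \<bar>real_cond_exp M F f x\<bar> powr p \<le> real_cond_exp M F (\<lambda>x. \<bar>f x\<bar> powr p) x"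
  proof -
    have qm: "(\<lambda>x::real. \<bar>x\<bar> powr p) \<in> borel_measurable borel" by measurable
    show ?thesis
      by (rule sigma_finite_subalgebra.real_cond_exp_jensens_inequality(2)[where I=UNIV and a=0 and b=0,
          OF sfs intf _ _ i convex_abs_powr[OF assms(3)] qm]) simp_all
  qed
  show ?thesis
  proof (rule Bochner_Integration.integrable_bound[OF sigma_finite_subalgebra.real_cond_exp_int(1)[OF sfs i]])
    show "(\<lambda>x. \<bar>real_cond_exp M F f x\<bar> powr p) \<in> borel_measurable M" by measurable
    show "AE x in M. norm (\<bar>real_cond_exp M F f x\<bar> powr p) \<le> norm (real_cond_exp M F (\<lambda>x. \<bar>f x\<bar> powr p) x)"
      using J by eventually_elim auto
  qed
qed

lemma young_aux:
  fixes y N p :: real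
  assumes "N > 0" "p \<ge> 1" "y \<ge> 0"
  shows "y / N powr (1/p) \<le> (y powr p / N) / p + (1 - 1/p)"
proof (cases "y = 0")
  case True then show ?thesis using assms by (simp add: field_simps)
next
  case False
  have "(y powr p / N) powr (1/p) * 1 powr (1 - 1/p) \<le> (1/p) * (y powr p / N) + (1 - 1/p) * 1"
    using assms False by (intro Youngs_inequality_0) (auto simp: field_simps)
  moreover have "(y powr p / N) powr (1/p) = y / N powr (1/p)"
    using assms False by (simp add: powr_divide powr_powr)
  ultimately show ?thesis by (simp add: mult.commute)
qed

lemma L1_le_Lp:
  assumes "prob_space M" "p \<ge> 1" "integrable M (\<lambda>x. \<bar>g x\<bar> powr p)" "integrable M g"
  shows "(\<integral>x. \<bar>g x\<bar> \<partial>M) \<le> Lp_norm M p g"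
proof -
  interpret prob_space M by fact
  have gm[measurable]: "g \<in> borel_measurable M" using assms(4) by (rule borel_measurable_integrable)
  define N where "N = (\<integral>x. \<bar>g x\<bar> powr p \<partial>M)"
  have N0: "N \<ge> 0" unfolding N_def by (rule integral_nonneg_AE) auto
  show ?thesis
  proof (cases "N = 0")
    case True
    then have "AE x in M. \<bar>g x\<bar> powr p = 0"
      using integral_nonneg_eq_0_iff_AE[OF assms(3)] unfolding N_def by auto
    then have "AE x in M. \<bar>g x\<bar> = 0" by eventually_elim simp
    then have "(\<integral>x. \<bar>g x\<bar> \<partial>M) = (\<integral>x. 0 \<partial>M)" by (intro integral_cong_AE) simp_all
    then have "(\<integral>x. \<bar>g x\<bar> \<partial>M) = 0" by simp
    moreover have "Lp_norm M p g = 0" unfolding Lp_norm_def using True N_def by simp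
    ultimately show ?thesis by simp
  next
    case False
    then have Np: "N > 0" using N0 by auto
    have i1: "integrable M (\<lambda>x. \<bar>g x\<bar> / N powr (1/p))"
      using assms(4) by (intro integrable_divide integrable_abs)
    have i3: "integrable M (\<lambda>x. (\<bar>g x\<bar> powr p / N) / p)"
      using assms(3) by (intro integrable_divide)
    have i2: "integrable M (\<lambda>x. (\<bar>g x\<bar> powr p / N) / p + (1 - 1/p))"
      by (intro Bochner_Integration.integrable_add i3 integrable_const)
    have "(\<integral>x. \<bar>g x\<bar> / N powr (1/p) \<partial>M) \<le> (\<integral>x. (\<bar>g x\<bar> powr p / N) / p + (1 - 1/p) \<partial>M)"
      by (intro integral_mono i1 i2 young_aux[OF Np assms(2) abs_ge_zero])
    also have "\<dots> = (\<integral>x. (\<bar>g x\<bar> powr p / N) / p \<partial>M) + (\<integral>x. (1 - 1/p) \<partial>M)"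
      by (intro Bochner_Integration.integral_add i3 integrable_const)
    also have "\<dots> = N / N / p + (1 - 1/p)"
      unfolding integral_divide_zero N_def[symmetric] by (simp add: prob_space)
    also have "\<dots> = 1" using Np assms(2) by simp
    finally have "(\<integral>x. \<bar>g x\<bar> \<partial>M) / N powr (1/p) \<le> 1" by simp
    moreover have "N powr (1/p) > 0" using Np by simp
    ultimately have "(\<integral>x. \<bar>g x\<bar> \<partial>M) \<le> N powr (1/p)" by (simp add: pos_divide_le_eq)
    then show ?thesis unfolding Lp_norm_def N_def .
  qed
qed

lemma set_int_abs_le:
  fixes g :: "'a \<Rightarrow> real"
  assumes "integrable M g" "S \<in> sets M"
  shows "\<bar>LINT x:S|M. g x\<bar> \<le> (\<integral>x. \<bar>g x\<bar> \<partial>M)"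
  unfolding set_lebesgue_integral_def
proof -
  have i: "integrable M (\<lambda>x. indicat_real S x *\<^sub>R g x)" by (rule integrable_mult_indicator[OF assms(2,1)])
  have "\<bar>LINT x|M. indicat_real S x *\<^sub>R g x\<bar> \<le> (LINT x|M. \<bar>indicat_real S x *\<^sub>R g x\<bar>)"
    by (rule integral_abs_bound)
  also have "\<dots> \<le> (\<integral>x. \<bar>g x\<bar> \<partial>M)"
    by (rule integral_mono[OF integrable_abs[OF i] integrable_abs[OF assms(1)]]) (simp add: indicator_def)
  finally show "\<bar>LINT x|M. indicat_real S x *\<^sub>R g x\<bar> \<le> (\<integral>x. \<bar>g x\<bar> \<partial>M)" .
qed

lemma diff_powr_bound:
  fixes a b p :: real assumes "p \<ge> 1"
  shows "\<bar>a - b\<bar> powr p \<le> 2 powr p * (\<bar>a\<bar> powr p + \<bar>b\<bar> powr p)"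
proof -
  have "\<bar>a - b\<bar> powr p \<le> (2 * max \<bar>a\<bar> \<bar>b\<bar>) powr p"
    using assms by (intro powr_mono2) auto
  also have "\<dots> = 2 powr p * max \<bar>a\<bar> \<bar>b\<bar> powr p" by (simp add: powr_mult)
  also have "\<dots> \<le> 2 powr p * (\<bar>a\<bar> powr p + \<bar>b\<bar> powr p)"
    by (intro mult_left_mono) (auto simp: max_def)
  finally show ?thesis .
qed

theorem lemma3p3:
  fixes M :: "'a measure" and \<Sigma> Q :: "'a set set" and f :: "'a \<Rightarrow> real"
    and k :: nat and p \<delta> :: real
  assumes "k \<ge> 1" and "p \<ge> 1" and "0 < \<delta>" and "\<delta> \<le> 1"
    and "prob_space M"
    and "k_semiring k (space M) \<Sigma>" and "\<Sigma> \<subseteq> sets M"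
    and "finite_partition (space M) Q" and "Q \<subseteq> \<Sigma>"
    and "in_Lp M p f"
    and "unif_norm M \<Sigma> (\<lambda>x. f x - cond_exp_part M Q f x) > \<delta>"
  shows "\<exists>R. finite_partition (space M) R \<and> refines R Q \<and> R \<subseteq> \<Sigma> \<and>
             card R \<le> card Q * (k + 1) \<and>
             Lp_norm M p (\<lambda>x. cond_exp_part M R f x - cond_exp_part M Q f x) > \<delta>"
proof -
  have ks1: "\<forall>S\<in>\<Sigma>. S \<subseteq> space M" using assms(6) by (simp add: k_semiring_def)
  have ks2: "\<forall>S\<in>\<Sigma>. \<forall>T\<in>\<Sigma>. S \<inter> T \<in> \<Sigma>" using assms(6) by (simp add: k_semiring_def)
  have ks3: "\<forall>S\<in>\<Sigma>. \<forall>T\<in>\<Sigma>. \<exists>l R. 1 \<le> l \<and> l \<le> k \<and> (\<forall>i<l. R i \<in> \<Sigma>) \<and>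
        (\<forall>i<l. \<forall>j<l. i \<noteq> j \<longrightarrow> R i \<inter> R j = {}) \<and> S - T = (\<Union>i<l. R i)"
    using assms(6) by (simp add: k_semiring_def)
  have empty\<Sigma>: "{} \<in> \<Sigma>" using assms(6) by (simp add: k_semiring_def)
  have \<Sigma>sub: "\<And>S. S \<in> \<Sigma> \<Longrightarrow> S \<subseteq> space M" using ks1 by (rule bspec)
  have \<Sigma>int: "\<And>S T. S \<in> \<Sigma> \<Longrightarrow> T \<in> \<Sigma> \<Longrightarrow> S \<inter> T \<in> \<Sigma>" using ks2 by simp
  note fp = assms(8)[unfolded finite_partition_def]
  have finQ: "finite Q" and Qne: "\<And>A. A \<in> Q \<Longrightarrow> A \<noteq> {}" and disjQ: "disjoint Q"
    and UQ: "\<Union>Q = space M" using fp by auto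
  have QM: "Q \<subseteq> sets M" using assms(7,9) by blast
  have sfsQ: "sigma_finite_subalgebra M (part_alg M Q)" by (rule subalg_part[OF assms(5) QM])
  have intf: "integrable M f" by (rule Lp_integrable[OF assms(5,2,10)])
  define EQ where "EQ = real_cond_exp M (part_alg M Q) f"
  have intEQ: "integrable M EQ" unfolding EQ_def by (rule sigma_finite_subalgebra.real_cond_exp_int(1)[OF sfsQ intf])
  define h where "h = (\<lambda>x. f x - EQ x)"
  have inth: "integrable M h" unfolding h_def using intf intEQ by (rule Bochner_Integration.integrable_diff)
  define V where "V = {\<bar>LINT x:S|M. h x\<bar> | S. S \<in> \<Sigma>}"
  have supV: "\<delta> < Sup V"
    using assms(11) unfolding unif_norm_def cond_exp_part_def h_def EQ_def V_def .
  have neV: "V \<noteq> {}" unfolding V_def using empty\<Sigma> by blast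
  have bddV: "bdd_above V"
    unfolding V_def
  proof (rule bdd_aboveI)
    fix y assume "y \<in> {\<bar>LINT x:S|M. h x\<bar> | S. S \<in> \<Sigma>}"
    then obtain S where "S \<in> \<Sigma>" "y = \<bar>LINT x:S|M. h x\<bar>" by blast
    moreover have "S \<in> sets M" using assms(7) \<open>S \<in> \<Sigma>\<close> by (rule subsetD)
    ultimately show "y \<le> (\<integral>x. \<bar>h x\<bar> \<partial>M)" using set_int_abs_le[OF inth] by simp
  qed
  have "\<exists>y\<in>V. \<delta> < y" using iffD1[OF less_cSup_iff[OF neV bddV] supV] .
  then obtain y where "y \<in> V" "\<delta> < y" ..
  then obtain S where S\<Sigma>: "S \<in> \<Sigma>" and Sbig: "\<delta> < \<bar>LINT x:S|M. h x\<bar>" unfolding V_def by blast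
  have SM: "S \<in> sets M" using assms(7) S\<Sigma> by (rule subsetD)
  have "\<forall>A. \<exists>l. \<exists>RR. A \<in> Q \<longrightarrow> (l \<le> k \<and> (\<forall>i<l. RR i \<in> \<Sigma>) \<and>
        (\<forall>i<l. \<forall>j<l. i \<noteq> j \<longrightarrow> RR i \<inter> RR j = {}) \<and> A - S = (\<Union>i<l. RR i))"
  proof
    fix A show "\<exists>l RR. A \<in> Q \<longrightarrow> (l \<le> k \<and> (\<forall>i<l. RR i \<in> \<Sigma>) \<and>
        (\<forall>i<l. \<forall>j<l. i \<noteq> j \<longrightarrow> RR i \<inter> RR j = {}) \<and> A - S = (\<Union>i<l. RR i))"
    proof (cases "A \<in> Q")
      case True
      have "A \<in> \<Sigma>" using assms(9) True by (rule subsetD)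
      have "\<exists>l R. 1 \<le> l \<and> l \<le> k \<and> (\<forall>i<l. R i \<in> \<Sigma>) \<and>
        (\<forall>i<l. \<forall>j<l. i \<noteq> j \<longrightarrow> R i \<inter> R j = {}) \<and> A - S = (\<Union>i<l. R i)"
        using bspec[OF bspec[OF ks3 \<open>A \<in> \<Sigma>\<close>] S\<Sigma>] .
      then obtain l RR where lRR: "1 \<le> l \<and> l \<le> k \<and> (\<forall>i<l. RR i \<in> \<Sigma>) \<and>
        (\<forall>i<l. \<forall>j<l. i \<noteq> j \<longrightarrow> RR i \<inter> RR j = {}) \<and> A - S = (\<Union>i<l. RR i)"
        by (elim exE)
      show ?thesis
        apply (rule exI[of _ l], rule exI[of _ RR])
        using lRR by simp
    qed simp
  qed
  then have "\<exists>L. \<forall>A. \<exists>RR. A \<in> Q \<longrightarrow> (L A \<le> k \<and> (\<forall>i<L A. RR i \<in> \<Sigma>) \<and>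
        (\<forall>i<L A. \<forall>j<L A. i \<noteq> j \<longrightarrow> RR i \<inter> RR j = {}) \<and> A - S = (\<Union>i<L A. RR i))"
    by (rule choice)
  then obtain L where "\<forall>A. \<exists>RR. A \<in> Q \<longrightarrow> (L A \<le> k \<and> (\<forall>i<L A. RR i \<in> \<Sigma>) \<and>
        (\<forall>i<L A. \<forall>j<L A. i \<noteq> j \<longrightarrow> RR i \<inter> RR j = {}) \<and> A - S = (\<Union>i<L A. RR i))" ..
  then have "\<exists>RR. \<forall>A. A \<in> Q \<longrightarrow> (L A \<le> k \<and> (\<forall>i<L A. RR A i \<in> \<Sigma>) \<and>
        (\<forall>i<L A. \<forall>j<L A. i \<noteq> j \<longrightarrow> RR A i \<inter> RR A j = {}) \<and> A - S = (\<Union>i<L A. RR A i))"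
    by (rule choice)
  then obtain RR where RR0: "\<forall>A. A \<in> Q \<longrightarrow> (L A \<le> k \<and> (\<forall>i<L A. RR A i \<in> \<Sigma>) \<and>
        (\<forall>i<L A. \<forall>j<L A. i \<noteq> j \<longrightarrow> RR A i \<inter> RR A j = {}) \<and> A - S = (\<Union>i<L A. RR A i))" ..
  have RR: "\<And>A. A \<in> Q \<Longrightarrow> L A \<le> k \<and> (\<forall>i<L A. RR A i \<in> \<Sigma>) \<and>
        (\<forall>i<L A. \<forall>j<L A. i \<noteq> j \<longrightarrow> RR A i \<inter> RR A j = {}) \<and> A - S = (\<Union>i<L A. RR A i)"
    using RR0 by blast
  have Lk: "\<And>A. A \<in> Q \<Longrightarrow> L A \<le> k" using RR by simp
  have RR\<Sigma>: "\<And>A i. A \<in> Q \<Longrightarrow> i < L A \<Longrightarrow> RR A i \<in> \<Sigma>" using RR by simp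
  have RRdisj: "\<And>A i j. A \<in> Q \<Longrightarrow> i < L A \<Longrightarrow> j < L A \<Longrightarrow> i \<noteq> j \<Longrightarrow> RR A i \<inter> RR A j = {}"
    using RR by simp
  have RRun: "\<And>A. A \<in> Q \<Longrightarrow> A - S = (\<Union>i<L A. RR A i)" using RR by simp
  have RRsub: "\<And>A i. A \<in> Q \<Longrightarrow> i < L A \<Longrightarrow> RR A i \<subseteq> A - S"
  proof -
    fix A i assume a: "A \<in> Q" "i < L A"
    show "RR A i \<subseteq> A - S" unfolding RRun[OF a(1)] using a(2) by auto
  qed
  define R0 where "R0 = (\<lambda>A. A \<inter> S) ` Q \<union> (\<Union>A\<in>Q. RR A ` {..<L A})"
  define R where "R = R0 - {{}}"
  have finR0: "finite R0" unfolding R0_def using finQ by auto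
  have finR: "finite R" unfolding R_def using finR0 by auto
  have R0cases: "\<And>X. X \<in> R0 \<Longrightarrow> (\<exists>A\<in>Q. X = A \<inter> S) \<or> (\<exists>A\<in>Q. \<exists>i<L A. X = RR A i)"
    unfolding R0_def by (elim UnE UN_E imageE) auto
  have R0sub: "\<And>X. X \<in> R0 \<Longrightarrow> \<exists>A\<in>Q. X \<subseteq> A"
  proof -
    fix X assume "X \<in> R0"
    from R0cases[OF this] show "\<exists>A\<in>Q. X \<subseteq> A"
    proof (elim disjE bexE exE conjE)
      fix A assume "A \<in> Q" "X = A \<inter> S" then show ?thesis by auto
    next
      fix A i assume "A \<in> Q" "i < L A" "X = RR A i"
      then show ?thesis using RRsub[of A i] by auto
    qed
  qed
  have refR: "refines R Q" unfolding refines_def R_def using R0sub by simp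
  have R\<Sigma>: "R \<subseteq> \<Sigma>"
  proof
    fix X assume "X \<in> R"
    then have "X \<in> R0" unfolding R_def by simp
    from R0cases[OF this] show "X \<in> \<Sigma>"
    proof (elim disjE bexE exE conjE)
      fix A assume "A \<in> Q" "X = A \<inter> S"
      then show ?thesis using \<Sigma>int[OF _ S\<Sigma>] assms(9) by auto
    next
      fix A i assume "A \<in> Q" "i < L A" "X = RR A i"
      then show ?thesis using RR\<Sigma> by simp
    qed
  qed
  have cardR: "card R \<le> card Q * (k + 1)"
  proof -
    have "card R \<le> card R0" unfolding R_def using finR0 by (intro card_mono) auto
    also have "\<dots> \<le> card ((\<lambda>A. A \<inter> S) ` Q) + card (\<Union>A\<in>Q. RR A ` {..<L A})"
      unfolding R0_def by (rule card_Un_le)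
    also have "\<dots> \<le> card Q + (\<Sum>A\<in>Q. card (RR A ` {..<L A}))"
      by (intro add_mono card_image_le[OF finQ] card_UN_le[OF finQ])
    also have "\<dots> \<le> card Q + (\<Sum>A\<in>Q. k)"
    proof -
      have "card (RR A ` {..<L A}) \<le> k" if "A \<in> Q" for A
        using card_image_le[of "{..<L A}" "RR A"] Lk[OF that] by simp
      then show ?thesis by (intro add_mono sum_mono) auto
    qed
    also have "\<dots> = card Q * (k + 1)" by simp
    finally show ?thesis .
  qed
  have UR: "\<Union>R = space M"
  proof
    show "\<Union>R \<subseteq> space M" using R0sub UQ unfolding R_def by blast
    show "space M \<subseteq> \<Union>R"
    proof
      fix x assume "x \<in> space M"
      then obtain A where A: "A \<in> Q" "x \<in> A" using UQ by blast
      show "x \<in> \<Union>R"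
      proof (cases "x \<in> S")
        case True
        then have "A \<inter> S \<in> R" unfolding R_def R0_def using A True by blast
        then show ?thesis using True A by blast
      next
        case False
        then have "x \<in> A - S" using A by blast
        then obtain i where "i < L A" "x \<in> RR A i" unfolding RRun[OF A(1)] by blast
        then have "RR A i \<in> R" unfolding R_def R0_def using A by blast
        then show ?thesis using \<open>x \<in> RR A i\<close> by blast
      qed
    qed
  qed
  have disjR: "disjoint R"
  proof (rule disjointI)
    fix X Y assume XY: "X \<in> R" "Y \<in> R" "X \<noteq> Y"
    then have X0: "X \<in> R0" and Y0: "Y \<in> R0" unfolding R_def by auto
    obtain A where A: "A \<in> Q" "X \<subseteq> A" using R0sub[OF X0] by blast
    obtain B where B: "B \<in> Q" "Y \<subseteq> B" using R0sub[OF Y0] by blast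
    show "X \<inter> Y = {}"
    proof (cases "A = B")
      case False
      then have "A \<inter> B = {}" using disjQ A B by (auto dest: disjointD)
      then show ?thesis using A B by blast
    next
      case True
      have XA: "X = A \<inter> S \<or> (\<exists>i<L A. X = RR A i)"
      proof -
        from R0cases[OF X0] show ?thesis
        proof
          assume "\<exists>A'\<in>Q. X = A' \<inter> S"
          then obtain A' where A': "A' \<in> Q" "X = A' \<inter> S" by blast
          have "X \<noteq> {}" using XY unfolding R_def by blast
          then have "A' \<inter> A \<noteq> {}" using A A' by blast
          then have "A' = A" using disjQ A A' by (auto dest: disjointD)
          then show ?thesis using A' by blast
        next
          assume "\<exists>A'\<in>Q. \<exists>i<L A'. X = RR A' i"
          then obtain A' i where A': "A' \<in> Q" "i < L A'" "X = RR A' i" by blast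
          have "X \<noteq> {}" using XY unfolding R_def by blast
          then have "A' \<inter> A \<noteq> {}" using A A' RRsub[OF A'(1,2)] by blast
          then have "A' = A" using disjQ A A' by (auto dest: disjointD)
          then show ?thesis using A' by blast
        qed
      qed
      have YA: "Y = A \<inter> S \<or> (\<exists>i<L A. Y = RR A i)"
      proof -
        from R0cases[OF Y0] show ?thesis
        proof
          assume "\<exists>A'\<in>Q. Y = A' \<inter> S"
          then obtain A' where A': "A' \<in> Q" "Y = A' \<inter> S" by blast
          have "Y \<noteq> {}" using XY unfolding R_def by blast
          then have "A' \<inter> A \<noteq> {}" using B True A' by blast
          then have "A' = A" using disjQ A A' by (auto dest: disjointD)
          then show ?thesis using A' by blast
        next
          assume "\<exists>A'\<in>Q. \<exists>i<L A'. Y = RR A' i"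
          then obtain A' i where A': "A' \<in> Q" "i < L A'" "Y = RR A' i" by blast
          have "Y \<noteq> {}" using XY unfolding R_def by blast
          then have "A' \<inter> A \<noteq> {}" using B True A' RRsub[OF A'(1,2)] by blast
          then have "A' = A" using disjQ A A' by (auto dest: disjointD)
          then show ?thesis using A' by blast
        qed
      qed
      show ?thesis
        using XA YA XY(3) RRsub[OF A(1)] RRdisj[OF A(1)] by blast
    qed
  qed
  have Rne: "\<forall>X\<in>R. X \<noteq> {}" unfolding R_def by blast
  have fpR: "finite_partition (space M) R"
    unfolding finite_partition_def using finR Rne disjR UR by blast
  have RM: "R \<subseteq> sets M" using R\<Sigma> assms(7) by blast
  have sfsR: "sigma_finite_subalgebra M (part_alg M R)" by (rule subalg_part[OF assms(5) RM])
  define ER where "ER = real_cond_exp M (part_alg M R) f"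
  have intER: "integrable M ER" unfolding ER_def by (rule sigma_finite_subalgebra.real_cond_exp_int(1)[OF sfsR intf])
  have RP: "R \<subseteq> Pow (space M)" using RM sets.sets_into_space by blast
  have setsR: "sets (part_alg M R) = sigma_sets (space M) R"
    unfolding part_alg_def by (rule sets_measure_of[OF RP])
  have Seq: "S = \<Union>{X\<in>R. X \<subseteq> S}"
  proof
    show "\<Union>{X\<in>R. X \<subseteq> S} \<subseteq> S" by blast
    show "S \<subseteq> \<Union>{X\<in>R. X \<subseteq> S}"
    proof
      fix x assume "x \<in> S"
      then have "x \<in> space M" using \<Sigma>sub[OF S\<Sigma>] by blast
      then obtain A where A: "A \<in> Q" "x \<in> A" using UQ by blast
      then have "A \<inter> S \<in> R" unfolding R_def R0_def using \<open>x \<in> S\<close> by blast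
      then show "x \<in> \<Union>{X\<in>R. X \<subseteq> S}" using A \<open>x \<in> S\<close> by blast
    qed
  qed
  have "\<Union>{X\<in>R. X \<subseteq> S} \<in> sets (part_alg M R)"
  proof (rule sets.finite_Union)
    show "finite {X\<in>R. X \<subseteq> S}" using finR by simp
    show "{X\<in>R. X \<subseteq> S} \<subseteq> sets (part_alg M R)" unfolding setsR by (auto intro: sigma_sets.Basic)
  qed
  then have SR: "S \<in> sets (part_alg M R)" using Seq by simp
  have intAf: "(LINT x:S|M. f x) = (LINT x:S|M. ER x)"
    unfolding ER_def by (rule sigma_finite_subalgebra.real_cond_exp_intA[OF sfsR intf SR])
  have si: "set_integrable M S u" if "integrable M u" for u :: "'a \<Rightarrow> real"
    unfolding set_integrable_def by (rule integrable_mult_indicator[OF SM that])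
  define g where "g = (\<lambda>x. ER x - EQ x)"
  have intg: "integrable M g" unfolding g_def using intER intEQ by (rule Bochner_Integration.integrable_diff)
  have "(LINT x:S|M. g x) = (LINT x:S|M. ER x) - (LINT x:S|M. EQ x)"
    unfolding g_def by (rule set_integral_diff(2)[OF si[OF intER] si[OF intEQ]])
  also have "\<dots> = (LINT x:S|M. f x) - (LINT x:S|M. EQ x)" using intAf by simp
  also have "\<dots> = (LINT x:S|M. h x)"
    unfolding h_def by (rule set_integral_diff(2)[OF si[OF intf] si[OF intEQ], symmetric])
  finally have gS: "(LINT x:S|M. g x) = (LINT x:S|M. h x)" .
  have ERp: "integrable M (\<lambda>x. \<bar>ER x\<bar> powr p)"
    unfolding ER_def by (rule cond_Lp[OF sfsR assms(5,2,10)])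
  have EQp: "integrable M (\<lambda>x. \<bar>EQ x\<bar> powr p)"
    unfolding EQ_def by (rule cond_Lp[OF sfsQ assms(5,2,10)])
  have gp: "integrable M (\<lambda>x. \<bar>g x\<bar> powr p)"
  proof (rule Bochner_Integration.integrable_bound)
    show "integrable M (\<lambda>x. 2 powr p * (\<bar>ER x\<bar> powr p + \<bar>EQ x\<bar> powr p))"
      using ERp EQp by (intro integrable_mult_right Bochner_Integration.integrable_add)
    show "(\<lambda>x. \<bar>g x\<bar> powr p) \<in> borel_measurable M"
      using borel_measurable_integrable[OF intg] by measurable
    have "norm (\<bar>g x\<bar> powr p) \<le> norm (2 powr p * (\<bar>ER x\<bar> powr p + \<bar>EQ x\<bar> powr p))" for x
      using diff_powr_bound[OF assms(2), of "ER x" "EQ x"] unfolding g_def by simp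
    then show "AE x in M. norm (\<bar>g x\<bar> powr p) \<le> norm (2 powr p * (\<bar>ER x\<bar> powr p + \<bar>EQ x\<bar> powr p))"
      by (intro AE_I2)
  qed
  have "\<delta> < \<bar>LINT x:S|M. g x\<bar>" using Sbig gS by simp
  also have "\<dots> \<le> (\<integral>x. \<bar>g x\<bar> \<partial>M)" by (rule set_int_abs_le[OF intg SM])
  also have "\<dots> \<le> Lp_norm M p g" by (rule L1_le_Lp[OF assms(5,2) gp intg])
  finally have "\<delta> < Lp_norm M p (\<lambda>x. cond_exp_part M R f x - cond_exp_part M Q f x)"
    unfolding g_def ER_def EQ_def cond_exp_part_def .
  then show ?thesis using fpR refR R\<Sigma> cardR by blast
qed

end
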